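(* Let $\mathcal C$ be a set of representatives of the conjugacy classes of $G$. Under the isomorphism $\mathrm{HH}^\bullet(S(V)\#G)\cong\bigoplus_{g\in\mathcal C}\mathrm{HH}^\bullet(S(V),S(V)\otimes g)^{Z(g)}$ (which identifies $\alpha\in\mathrm{HH}^\bullet(S(V),S(V)\otimes g)^{Z(g)}$ with $T^G_{Z(g)}(\alpha)=\sum_{h\in[G/Z(g)]}{}^h\alpha$), the cup product corresponds to the product $\dot\smile$ given as follows: for $\alpha\in\mathrm{HH}^\bullet(S(V),S(V)\otimes g)^{Z(g)}$ and $\beta\in\mathrm{HH}^\bullet(S(V),S(V)\otimes h)^{Z(h)}$ ($g,h\in\mathcal C$), $$\alpha\ \dot\smile\ \beta=\sum_{x\in D}T^{Z(k)}_{{}^yZ(g)\cap{}^{yx}Z(h)}\big({}^y\alpha\smile{}^{yx}\beta\big),$$ where $D$ is a set of representatives of the double cosets $Z(g)\backslash G/Z(h)$, and for each $x\in D$, $k=k(x)\in\mathcal C$ and $y=y(x)\in G$ are chosen so that ${}^yg\cdot{}^{yx}h=k$. Here ${}^y\alpha\smile{}^{yx}\beta$ is the cup product in $\mathrm{HH}^\bullet(S(V),S(V)\#G)^{{}^yZ(g)\cap{}^{yx}Z(h)}$, and the transfer lands in the $k$-component $\mathrm{HH}^\bullet(S(V),S(V)\otimes k)^{Z(k)}$.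
   Context: Let $G$ be a finite group acting linearly on a finite-dimensional complex vector space $V$; fix a $G$-invariant Hermitian inner product; $V^g$ denotes the fixed space of $g$ and $(V^g)^\perp$ its orthogonal complement. $S(V)\#G$ is the skew group algebra. $\mathrm{HH}^\bullet(S(V),S(V)\#G)$ (Hochschild cohomology with cup product) decomposes as $\bigoplus_{g\in G}\mathrm{HH}^\bullet(S(V),S(V)\otimes g)$, where the $g$-component $\mathrm{HH}^\bullet(S(V),S(V)\otimes g)$ is isomorphic to $S(V^g)\otimes\bigwedge^{\bullet-\operatorname{codim}V^g}(V^g)^*\otimes\bigwedge^{\operatorname{codim}V^g}((V^g)^\perp)^*\otimes g$. $G$ acts on $\mathrm{HH}^\bullet(S(V),S(V)\#G)$ by algebra automorphisms (induced from its action on $V$ and conjugation on $S(V)\#G$), mapping the $g$-component to the $xgx^{-1}$-component, ${}^x\alpha$ denoting the image of $\alpha$ under $x$; ${}^yL=yLy^{-1}$ for a subgroup $L$ and ${}^yg=ygy^{-1}$. It is known that $\mathrm{HH}^\bullet(S(V)\#G)\cong\mathrm{HH}^\bullet(S(V),S(V)\#G)^G$ as algebras. $Z(g)$ is the centralizer of $g$ in $G$. For subgroups $J\le L\le G$ and a $G$-algebra $A$, the transfer $T^L_J:A^J\to A^L$ is $T^L_J(a)=\sum_{h\in[L/J]}{}^ha$, with $[L/J]$ a set of left coset representatives. *)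

theory Defs
  imports "HOL-Algebra.Coset"
begin

text \<open>Abstract setting: a finite group G (HOL-Algebra) acting on a ring A (playing the role of
  HH(S(V), S(V)#G) with cup product), which is G-graded: A is the direct sum of components
  comp g (playing the role of HH(S(V), S(V) tensor g)), the product maps comp g x comp h into
  comp (g h), and x in G acts by ring automorphisms mapping comp g to comp (x g x^-1).\<close>

definition conjg :: "('g, 'm) monoid_scheme \<Rightarrow> 'g \<Rightarrow> 'g \<Rightarrow> 'g" where
  "conjg G y g = y \<otimes>\<^bsub>G\<^esub> g \<otimes>\<^bsub>G\<^esub> inv\<^bsub>G\<^esub> y"

definition conjset :: "('g, 'm) monoid_scheme \<Rightarrow> 'g \<Rightarrow> 'g set \<Rightarrow> 'g set" where
  "conjset G y L = conjg G y ` L"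

definition centr :: "('g, 'm) monoid_scheme \<Rightarrow> 'g \<Rightarrow> 'g set" where
  "centr G g = {x \<in> carrier G. x \<otimes>\<^bsub>G\<^esub> g = g \<otimes>\<^bsub>G\<^esub> x}"

definition invariants :: "('g \<Rightarrow> 'a \<Rightarrow> 'a) \<Rightarrow> 'g set \<Rightarrow> 'a set" where
  "invariants act J = {a. \<forall>j\<in>J. act j a = a}"

definition lcosets_in :: "('g, 'm) monoid_scheme \<Rightarrow> 'g set \<Rightarrow> 'g set \<Rightarrow> 'g set set" where
  "lcosets_in G L J = {x <#\<^bsub>G\<^esub> J | x. x \<in> L}"

text \<open>Transfer T^L_J(a) = sum over a set of left coset representatives h of L/J of h.a
  (representatives chosen by Hilbert choice; independent of the choice on J-invariants).\<close>
definition transfer :: "('g, 'm) monoid_scheme \<Rightarrow> ('g \<Rightarrow> 'a \<Rightarrow> 'a::comm_monoid_add)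
    \<Rightarrow> 'g set \<Rightarrow> 'g set \<Rightarrow> 'a \<Rightarrow> 'a" where
  "transfer G act L J a = (\<Sum>c\<in>lcosets_in G L J. act (SOME r. r \<in> c) a)"

definition double_coset :: "('g, 'm) monoid_scheme \<Rightarrow> 'g set \<Rightarrow> 'g \<Rightarrow> 'g set \<Rightarrow> 'g set" where
  "double_coset G H x K = {a \<otimes>\<^bsub>G\<^esub> x \<otimes>\<^bsub>G\<^esub> b | a b. a \<in> H \<and> b \<in> K}"

end

theory Submission
  imports Defs
begin


context group begin

lemma inv_cancel_left [simp]: "x \<in> carrier G \<Longrightarrow> y \<in> carrier G \<Longrightarrow> inv x \<otimes> (x \<otimes> y) = y"
  by (simp add: m_assoc[symmetric])
lemma inv_cancel_left2 [simp]: "x \<in> carrier G \<Longrightarrow> y \<in> carrier G \<Longrightarrow> x \<otimes> (inv x \<otimes> y) = y"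
  by (simp add: m_assoc[symmetric])
lemmas gsimps = m_assoc inv_mult_group

lemma self_lcoset: "subgroup J G \<Longrightarrow> a \<in> carrier G \<Longrightarrow> a \<in> a <# J"
  unfolding l_coset_def by (auto intro!: bexI[of _ \<one>] subgroup.one_closed)

lemma mem_lcoset:
  assumes "subgroup J G" "a \<in> carrier G"
  shows "b \<in> a <# J \<longleftrightarrow> b \<in> carrier G \<and> inv a \<otimes> b \<in> J"
proof
  assume "b \<in> a <# J"
  then obtain j where j: "j \<in> J" "b = a \<otimes> j" unfolding l_coset_def by auto
  have jc: "j \<in> carrier G" using subgroup.mem_carrier[OF assms(1) j(1)] .
  show "b \<in> carrier G \<and> inv a \<otimes> b \<in> J"
    using j jc assms by (simp add: gsimps)
next
  assume b: "b \<in> carrier G \<and> inv a \<otimes> b \<in> J"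
  have "b = a \<otimes> (inv a \<otimes> b)" using b assms by (intro inv_cancel_left2[symmetric]) auto
  then show "b \<in> a <# J" using b unfolding l_coset_def by blast
qed

lemma lcoset_eq_iff:
  assumes J: "subgroup J G" and a: "a \<in> carrier G" and b: "b \<in> carrier G"
  shows "a <# J = b <# J \<longleftrightarrow> inv a \<otimes> b \<in> J"
proof
  assume "a <# J = b <# J"
  then have "b \<in> a <# J" using self_lcoset[OF J b] by simp
  then show "inv a \<otimes> b \<in> J" using mem_lcoset[OF J a] by simp
next
  assume "inv a \<otimes> b \<in> J"
  then have "b \<in> a <# J" using mem_lcoset[OF J a] b by simp
  then show "a <# J = b <# J" using l_repr_independence[OF _ a J] by simp
qed

lemma centr_subgroup: assumes "g \<in> carrier G" shows "subgroup (centr G g) G"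
proof (rule subgroupI)
  show "centr G g \<subseteq> carrier G" by (auto simp: centr_def)
  show "centr G g \<noteq> {}" using assms by (auto simp: centr_def intro!: exI[of _ \<one>])
  fix x assume x: "x \<in> centr G g"
  then have xc: "x \<in> carrier G" and e: "x \<otimes> g = g \<otimes> x" by (auto simp: centr_def)
  have "inv x \<otimes> g = g \<otimes> inv x"
  proof -
    have "inv x \<otimes> g = inv x \<otimes> (g \<otimes> x) \<otimes> inv x" using xc assms by (simp add: m_assoc)
    also have "\<dots> = inv x \<otimes> (x \<otimes> g) \<otimes> inv x" using e by (simp del: m_assoc)
    also have "\<dots> = g \<otimes> inv x" using xc assms by (simp add: gsimps)
    finally show ?thesis .
  qed
  then show "inv x \<in> centr G g" using xc by (simp add: centr_def)
next
  fix x y assume "x \<in> centr G g" "y \<in> centr G g"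
  then have x: "x \<in> carrier G" "x \<otimes> g = g \<otimes> x" and y: "y \<in> carrier G" "y \<otimes> g = g \<otimes> y"
    by (auto simp: centr_def)
  have "x \<otimes> y \<otimes> g = x \<otimes> (y \<otimes> g)" using x(1) y(1) assms by (simp add: m_assoc)
  also have "\<dots> = x \<otimes> (g \<otimes> y)" using y(2) by simp
  also have "\<dots> = x \<otimes> g \<otimes> y" using x(1) y(1) assms by (simp add: m_assoc)
  also have "\<dots> = g \<otimes> x \<otimes> y" using x(2) by simp
  also have "\<dots> = g \<otimes> (x \<otimes> y)" using x(1) y(1) assms by (simp add: m_assoc)
  finally show "x \<otimes> y \<in> centr G g" using x y by (simp add: centr_def)
qed

lemma mem_conjset:
  assumes L: "L \<subseteq> carrier G" and y: "y \<in> carrier G"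
  shows "u \<in> conjset G y L \<longleftrightarrow> u \<in> carrier G \<and> inv y \<otimes> u \<otimes> y \<in> L"
proof
  assume "u \<in> conjset G y L"
  then obtain z where z: "z \<in> L" "u = y \<otimes> z \<otimes> inv y" by (auto simp: conjset_def conjg_def)
  then have zc: "z \<in> carrier G" using L by auto
  show "u \<in> carrier G \<and> inv y \<otimes> u \<otimes> y \<in> L" using z zc y by (simp add: gsimps)
next
  assume u: "u \<in> carrier G \<and> inv y \<otimes> u \<otimes> y \<in> L"
  have "u = y \<otimes> (inv y \<otimes> u \<otimes> y) \<otimes> inv y" using u y by (simp add: m_assoc)
  then show "u \<in> conjset G y L" using u by (auto simp: conjset_def conjg_def)
qed

lemma conjset_centr:
  assumes y: "y \<in> carrier G" and g: "g \<in> carrier G"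
  shows "conjset G y (centr G g) = centr G (conjg G y g)"
proof -
  have *: "u \<otimes> (y \<otimes> g \<otimes> inv y) = y \<otimes> g \<otimes> inv y \<otimes> u \<longleftrightarrow> inv y \<otimes> u \<otimes> y \<otimes> g = g \<otimes> (inv y \<otimes> u \<otimes> y)"
    if u: "u \<in> carrier G" for u
  proof -
    have "u \<otimes> (y \<otimes> g \<otimes> inv y) = y \<otimes> g \<otimes> inv y \<otimes> u \<longleftrightarrow>
      inv y \<otimes> (u \<otimes> (y \<otimes> g \<otimes> inv y)) \<otimes> y = inv y \<otimes> (y \<otimes> g \<otimes> inv y \<otimes> u) \<otimes> y"
      using u y g by simp
    also have "\<dots> \<longleftrightarrow> inv y \<otimes> u \<otimes> y \<otimes> g = g \<otimes> (inv y \<otimes> u \<otimes> y)"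
      using u y g by (simp add: m_assoc)
    finally show ?thesis .
  qed
  note mc = mem_conjset[of "centr G g", OF _ y]
  show ?thesis
  proof (intro Set.set_eqI)
    fix u show "u \<in> conjset G y (centr G g) \<longleftrightarrow> u \<in> centr G (conjg G y g)"
    proof (cases "u \<in> carrier G")
      case True
      have "inv y \<otimes> u \<otimes> y \<in> centr G g \<longleftrightarrow> inv y \<otimes> u \<otimes> y \<otimes> g = g \<otimes> (inv y \<otimes> u \<otimes> y)"
        using True y g by (simp add: centr_def)
      also have "\<dots> \<longleftrightarrow> u \<otimes> (y \<otimes> g \<otimes> inv y) = y \<otimes> g \<otimes> inv y \<otimes> u"
        using *[OF True] by simp
      finally show ?thesis
        unfolding mc[OF subgroup.subset[OF centr_subgroup[OF g]]]
        using True by (simp add: centr_def conjg_def)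
    next
      case False
      then show ?thesis
        unfolding mc[OF subgroup.subset[OF centr_subgroup[OF g]]] by (simp add: centr_def)
    qed
  qed
qed

end


definition crep :: "'g set \<Rightarrow> 'g" where "crep c = (SOME r. r \<in> c)"

lemma lcosets_in_eq: "lcosets_in G L J = (\<lambda>x. x <#\<^bsub>G\<^esub> J) ` L"
  by (auto simp: lcosets_in_def)

lemma lcosets_inI: "x \<in> L \<Longrightarrow> x <#\<^bsub>G\<^esub> J \<in> lcosets_in G L J"
  by (auto simp: lcosets_in_def)

context group begin

lemma crep_mem: "subgroup J G \<Longrightarrow> x \<in> carrier G \<Longrightarrow> crep (x <# J) \<in> x <# J"
  unfolding crep_def by (rule someI[of _ x]) (rule self_lcoset)

lemma crep_carrier: "subgroup J G \<Longrightarrow> x \<in> carrier G \<Longrightarrow> crep (x <# J) \<in> carrier G"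
  using crep_mem mem_lcoset by blast

lemma crep_coset: "subgroup J G \<Longrightarrow> x \<in> carrier G \<Longrightarrow> crep (x <# J) <# J = x <# J"
  using crep_mem l_repr_independence by metis

lemma lcos_mult_cong:
  assumes J: "subgroup J G" and c: "w \<in> carrier G" "x \<in> carrier G" "y \<in> carrier G"
    and e: "x <# J = y <# J"
  shows "(w \<otimes> x) <# J = (w \<otimes> y) <# J"
proof -
  have "inv x \<otimes> y \<in> J" using e lcoset_eq_iff[OF J c(2,3)] by simp
  moreover have "inv (w \<otimes> x) \<otimes> (w \<otimes> y) = inv x \<otimes> y" using c by (simp add: gsimps)
  ultimately show ?thesis using lcoset_eq_iff[OF J] c by simp
qed

lemma lcosets_props:
  assumes J: "subgroup J G" and L: "subgroup L G" and JL: "J \<subseteq> L"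
    and c: "c \<in> lcosets_in G L J"
  shows "crep c \<in> L" "crep c \<in> carrier G" "crep c <# J = c"
proof -
  obtain x where x: "x \<in> L" "c = x <# J" using c by (auto simp: lcosets_in_def)
  have xc: "x \<in> carrier G" using subgroup.mem_carrier[OF L x(1)] .
  have m: "crep c \<in> x <# J" using crep_mem[OF J xc] x by simp
  then obtain j where j: "j \<in> J" "crep c = x \<otimes> j" unfolding l_coset_def by auto
  show "crep c \<in> L" using j x JL subgroup.m_closed[OF L] by auto
  show "crep c \<in> carrier G" using crep_carrier[OF J xc] x by simp
  show "crep c <# J = c" using crep_coset[OF J xc] x by simp
qed

end

locale gact = group G for G :: "('g,'m) monoid_scheme" (structure) +
  fixes act :: "'g \<Rightarrow> 'a::ab_group_add \<Rightarrow> 'a"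
  assumes act_one: "act \<one> a = a"
  and act_mult: "x \<in> carrier G \<Longrightarrow> z \<in> carrier G \<Longrightarrow> act (x \<otimes> z) a = act x (act z a)"
  and act_add: "x \<in> carrier G \<Longrightarrow> act x (a + b) = act x a + act x b"
  and finG: "finite (carrier G)"
begin

lemma act_zero: assumes "x \<in> carrier G" shows "act x 0 = 0"
proof -
  have "act x 0 + act x 0 = act x 0 + 0" using act_add[OF assms, of 0 0] by simp
  then show ?thesis by simp
qed

lemma act_sum: assumes "x \<in> carrier G" shows "act x (sum f S) = (\<Sum>i\<in>S. act x (f i))"
proof (cases "finite S")
  case True then show ?thesis
    by (induction S rule: finite_induct) (simp_all add: act_zero[OF assms] act_add[OF assms])
next
  case False then show ?thesis by (simp add: act_zero[OF assms])
qed

lemma inv_act: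
  assumes J: "subgroup J G" and a: "a \<in> invariants act J" and c: "x \<in> carrier G" "z \<in> carrier G"
    and e: "x <# J = z <# J"
  shows "act x a = act z a"
proof -
  have j: "inv x \<otimes> z \<in> J" using e lcoset_eq_iff[OF J c] by simp
  have "act z a = act (x \<otimes> (inv x \<otimes> z)) a" using c by simp
  also have "\<dots> = act x (act (inv x \<otimes> z) a)" using c by (intro act_mult) auto
  also have "\<dots> = act x a" using a j by (simp add: invariants_def)
  finally show ?thesis by simp
qed

lemma finite_lcosets: "L \<subseteq> carrier G \<Longrightarrow> finite (lcosets_in G L J)"
  unfolding lcosets_in_eq using finG finite_subset by blast

lemma transfer_crep: "transfer G act L J a = (\<Sum>c\<in>lcosets_in G L J. act (crep c) a)"
  unfolding transfer_def crep_def ..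

lemma transfer_reindex:
  assumes J: "subgroup J G" and L: "subgroup L G" and JL: "J \<subseteq> L"
    and a: "a \<in> invariants act J"
    and bij: "bij_betw \<phi> I (lcosets_in G L J)"
    and e: "\<And>i. i \<in> I \<Longrightarrow> e i \<in> carrier G \<and> \<phi> i = e i <# J"
  shows "transfer G act L J a = (\<Sum>i\<in>I. act (e i) a)"
proof -
  have "transfer G act L J a = (\<Sum>i\<in>I. act (crep (\<phi> i)) a)"
    unfolding transfer_crep using sum.reindex_bij_betw[OF bij, of "\<lambda>c. act (crep c) a"] by simp
  also have "\<dots> = (\<Sum>i\<in>I. act (e i) a)"
  proof (rule sum.cong[OF refl])
    fix i assume i: "i \<in> I"
    have pc: "\<phi> i \<in> lcosets_in G L J" using bij i by (auto simp: bij_betw_def)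
    show "act (crep (\<phi> i)) a = act (e i) a"
      using inv_act[OF J a lcosets_props(2)[OF J L JL pc]] e[OF i] lcosets_props(3)[OF J L JL pc]
      by simp
  qed
  finally show ?thesis .
qed

end


context gact begin

lemma transfer_invariant:
  assumes J: "subgroup J G" and L: "subgroup L G" and JL: "J \<subseteq> L"
    and a: "a \<in> invariants act J" and z: "z \<in> L"
  shows "act z (transfer G act L J a) = transfer G act L J a"
proof -
  have zc: "z \<in> carrier G" using subgroup.mem_carrier[OF L z] .
  have Lc: "L \<subseteq> carrier G" using subgroup.subset[OF L] .
  let ?C = "lcosets_in G L J"
  note P = lcosets_props[OF J L JL]
  have "act z (transfer G act L J a) = (\<Sum>c\<in>?C. act (z \<otimes> crep c) a)"
    unfolding transfer_crep act_sum[OF zc]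
    by (rule sum.cong[OF refl]) (use P(2) zc in \<open>simp add: act_mult\<close>)
  also have "\<dots> = transfer G act L J a"
  proof (rule transfer_reindex[OF J L JL a, symmetric])
    show "bij_betw (\<lambda>c. (z \<otimes> crep c) <# J) ?C ?C"
    proof (rule bij_betw_byWitness[where f'="\<lambda>d. (inv z \<otimes> crep d) <# J"])
      show "\<forall>c\<in>?C. (inv z \<otimes> crep ((z \<otimes> crep c) <# J)) <# J = c"
      proof
        fix c assume c: "c \<in> ?C"
        have zr: "z \<otimes> crep c \<in> carrier G" using P(2)[OF c] zc by simp
        have "(inv z \<otimes> crep ((z \<otimes> crep c) <# J)) <# J = (inv z \<otimes> (z \<otimes> crep c)) <# J"
          by (rule lcos_mult_cong[OF J]) (use zc zr crep_carrier[OF J zr] crep_coset[OF J zr] in auto)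
        also have "\<dots> = c" using zc P(2,3)[OF c] by simp
        finally show "(inv z \<otimes> crep ((z \<otimes> crep c) <# J)) <# J = c" .
      qed
      show "\<forall>d\<in>?C. (z \<otimes> crep ((inv z \<otimes> crep d) <# J)) <# J = d"
      proof
        fix d assume d: "d \<in> ?C"
        have zr: "inv z \<otimes> crep d \<in> carrier G" using P(2)[OF d] zc by simp
        have "(z \<otimes> crep ((inv z \<otimes> crep d) <# J)) <# J = (z \<otimes> (inv z \<otimes> crep d)) <# J"
          by (rule lcos_mult_cong[OF J]) (use zc zr crep_carrier[OF J zr] crep_coset[OF J zr] in auto)
        also have "\<dots> = d" using zc P(2,3)[OF d] by simp
        finally show "(z \<otimes> crep ((inv z \<otimes> crep d) <# J)) <# J = d" .
      qed
      show "(\<lambda>c. (z \<otimes> crep c) <# J) ` ?C \<subseteq> ?C"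
        using P(1) z subgroup.m_closed[OF L] by (auto intro!: lcosets_inI)
      show "(\<lambda>d. (inv z \<otimes> crep d) <# J) ` ?C \<subseteq> ?C"
        using P(1) z subgroup.m_closed[OF L] subgroup.m_inv_closed[OF L] by (auto intro!: lcosets_inI)
    qed
    fix c assume c: "c \<in> ?C"
    show "z \<otimes> crep c \<in> carrier G \<and> (z \<otimes> crep c) <# J = (z \<otimes> crep c) <# J"
      using P(2)[OF c] zc by simp
  qed
  finally show ?thesis .
qed

lemma transfer_trans:
  assumes J: "subgroup J G" and K: "subgroup K G" and JK: "J \<subseteq> K"
    and a: "a \<in> invariants act J"
  shows "transfer G act (carrier G) K (transfer G act K J a) = transfer G act (carrier G) J a"
proof -
  have S: "subgroup (carrier G) G" by (rule subgroup_self)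
  have KG: "K \<subseteq> carrier G" using subgroup.subset[OF K] .
  have JG: "J \<subseteq> carrier G" using subgroup.subset[OF J] .
  let ?A = "lcosets_in G (carrier G) K" and ?B = "lcosets_in G K J" and ?C = "lcosets_in G (carrier G) J"
  note PA = lcosets_props[OF K S KG] and PB = lcosets_props[OF J K JK] and PC = lcosets_props[OF J S JG]
  have "transfer G act (carrier G) K (transfer G act K J a)
      = (\<Sum>c\<in>?A. \<Sum>d\<in>?B. act (crep c \<otimes> crep d) a)"
    unfolding transfer_crep[of K J]
    unfolding transfer_crep
    by (rule sum.cong[OF refl], subst act_sum, use PA(2) in simp,
        rule sum.cong[OF refl], use PA(2) PB(2) in \<open>simp add: act_mult\<close>)
  also have "\<dots> = (\<Sum>p\<in>?A \<times> ?B. act (crep (fst p) \<otimes> crep (snd p)) a)"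
    by (simp add: sum.cartesian_product split_beta)
  also have "\<dots> = transfer G act (carrier G) J a"
  proof (rule transfer_reindex[OF J S JG a, symmetric])
    let ?f = "\<lambda>p. (crep (fst p) \<otimes> crep (snd p)) <# J"
    let ?g = "\<lambda>e. (crep e <# K, (inv (crep (crep e <# K)) \<otimes> crep e) <# J)"
    show "bij_betw ?f (?A \<times> ?B) ?C"
    proof (rule bij_betw_byWitness[where f'="?g"])
      show "\<forall>p\<in>?A \<times> ?B. ?g (?f p) = p"
      proof
        fix p assume p: "p \<in> ?A \<times> ?B"
        obtain c d where cd: "p = (c, d)" "c \<in> ?A" "d \<in> ?B" using p by auto
        let ?u = "crep c \<otimes> crep d"
        have uc: "?u \<in> carrier G" using PA(2)[OF cd(2)] PB(2)[OF cd(3)] by simp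
        have ru: "crep (?u <# J) \<in> carrier G" by (rule crep_carrier[OF J uc])
        have "crep (?u <# J) \<in> ?u <# J" by (rule crep_mem[OF J uc])
        then have j: "inv ?u \<otimes> crep (?u <# J) \<in> J" using mem_lcoset[OF J uc] by simp
        define j where "j = inv ?u \<otimes> crep (?u <# J)"
        have jc: "j \<in> carrier G" using j_def ru uc by simp
        have ru_eq: "crep (?u <# J) = crep c \<otimes> (crep d \<otimes> j)"
          unfolding j_def using ru PA(2)[OF cd(2)] PB(2)[OF cd(3)] by (simp add: gsimps)
        have dj: "crep d \<otimes> j \<in> K" using PB(1)[OF cd(3)] j JK j_def subgroup.m_closed[OF K] by auto
        have e1: "crep (?u <# J) <# K = c"
        proof -
          have "crep (?u <# J) <# K = crep c <# K"
            using lcoset_eq_iff[OF K ru PA(2)[OF cd(2)]] ru_eq dj PA(2)[OF cd(2)] PB(2)[OF cd(3)] jc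
            subgroup.m_inv_closed[OF K dj]
            by (simp add: gsimps)
          then show ?thesis using PA(3)[OF cd(2)] by simp
        qed
        have e2: "(inv (crep c) \<otimes> crep (?u <# J)) <# J = d"
        proof -
          have "(inv (crep c) \<otimes> crep (?u <# J)) <# J = crep d <# J"
            using lcoset_eq_iff[OF J _ PB(2)[OF cd(3)]] ru_eq PA(2)[OF cd(2)] PB(2)[OF cd(3)] jc j_def
              subgroup.m_inv_closed[OF J j] ru
            by (simp add: gsimps)
          then show ?thesis using PB(3)[OF cd(3)] by simp
        qed
        show "?g (?f p) = p" using cd e1 e2 by simp
      qed
      show "\<forall>e\<in>?C. ?f (?g e) = e"
      proof
        fix e assume e: "e \<in> ?C"
        let ?u = "crep e"
        have uc: "?u \<in> carrier G" using PC(2)[OF e] .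
        have r: "crep (?u <# K) \<in> carrier G" using crep_carrier[OF K uc] .
        have rm: "crep (?u <# K) \<in> ?u <# K" using crep_mem[OF K uc] .
        have vK: "inv (crep (?u <# K)) \<otimes> ?u \<in> K"
        proof -
          have "inv ?u \<otimes> crep (?u <# K) \<in> K" using rm mem_lcoset[OF K uc] by simp
          then have "inv (inv ?u \<otimes> crep (?u <# K)) \<in> K" using subgroup.m_inv_closed[OF K] by blast
          then show ?thesis using uc r by (simp add: gsimps)
        qed
        have "(inv (crep (?u <# K)) \<otimes> ?u) <# K = (inv (crep (?u <# K)) \<otimes> ?u) <# K" ..
        have vc: "inv (crep (?u <# K)) \<otimes> ?u \<in> carrier G" using uc r by simp
        have "?f (?g e) = (crep (?u <# K) \<otimes> crep ((inv (crep (?u <# K)) \<otimes> ?u) <# J)) <# J" by simp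
        also have "\<dots> = (crep (?u <# K) \<otimes> (inv (crep (?u <# K)) \<otimes> ?u)) <# J"
          by (rule lcos_mult_cong[OF J r crep_carrier[OF J vc] vc crep_coset[OF J vc]])
        also have "\<dots> = e" using uc r PC(3)[OF e] by simp
        finally show "?f (?g e) = e" .
      qed
      show "?f ` (?A \<times> ?B) \<subseteq> ?C"
        using PA(2) PB(2) by (auto intro!: lcosets_inI)
      show "?g ` ?C \<subseteq> ?A \<times> ?B"
      proof
        fix q assume "q \<in> ?g ` ?C"
        then obtain e where e: "e \<in> ?C" "q = ?g e" by blast
        let ?u = "crep e"
        have uc: "?u \<in> carrier G" using PC(2)[OF e(1)] .
        have r: "crep (?u <# K) \<in> carrier G" using crep_carrier[OF K uc] .
        have rm: "crep (?u <# K) \<in> ?u <# K" using crep_mem[OF K uc] .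
        have vK: "inv (crep (?u <# K)) \<otimes> ?u \<in> K"
        proof -
          have "inv ?u \<otimes> crep (?u <# K) \<in> K" using rm mem_lcoset[OF K uc] by simp
          then have "inv (inv ?u \<otimes> crep (?u <# K)) \<in> K" using subgroup.m_inv_closed[OF K] by blast
          then show ?thesis using uc r by (simp add: gsimps)
        qed
        show "q \<in> ?A \<times> ?B" using e uc vK by (auto simp: lcosets_in_def)
      qed
    qed
    fix p assume p: "p \<in> ?A \<times> ?B"
    show "crep (fst p) \<otimes> crep (snd p) \<in> carrier G \<and> ?f p = ?f p"
      using p PA(2) PB(2) by auto
  qed
  finally show ?thesis .
qed

end


context group begin

lemma conj_coset:
  assumes Z: "subgroup Z G" and c: "r \<in> carrier G" "r' \<in> carrier G" "w \<in> carrier G"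
  shows "(r \<otimes> w) <# Z = (r' \<otimes> w) <# Z \<longleftrightarrow> inv r \<otimes> r' \<in> conjset G w Z"
proof -
  have e: "inv (r \<otimes> w) \<otimes> (r' \<otimes> w) = inv w \<otimes> (inv r \<otimes> r') \<otimes> w" using c by (simp add: gsimps)
  show ?thesis
    unfolding lcoset_eq_iff[OF Z m_closed[OF c(1,3)] m_closed[OF c(2,3)]]
      mem_conjset[OF subgroup.subset[OF Z] c(3)] e using c by simp
qed

lemma conjg_closed: "y \<in> carrier G \<Longrightarrow> g \<in> carrier G \<Longrightarrow> conjg G y g \<in> carrier G"
  by (simp add: conjg_def)

lemma centr_mult:
  assumes a: "a \<in> carrier G" and b: "b \<in> carrier G" and u: "u \<in> centr G a" "u \<in> centr G b"
  shows "u \<in> centr G (a \<otimes> b)"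
proof -
  have uc: "u \<in> carrier G" and ua: "u \<otimes> a = a \<otimes> u" and ub: "u \<otimes> b = b \<otimes> u"
    using u by (auto simp: centr_def)
  have "u \<otimes> (a \<otimes> b) = u \<otimes> a \<otimes> b" using uc a b by (simp add: m_assoc)
  also have "\<dots> = a \<otimes> u \<otimes> b" using ua by simp
  also have "\<dots> = a \<otimes> (u \<otimes> b)" using uc a b by (simp add: m_assoc)
  also have "\<dots> = a \<otimes> (b \<otimes> u)" using ub by simp
  also have "\<dots> = a \<otimes> b \<otimes> u" using uc a b by (simp add: m_assoc)
  finally show ?thesis using uc by (simp add: centr_def)
qed

lemma conjg_centr: assumes "r \<in> centr G k" "k \<in> carrier G" shows "conjg G r k = k"
proof -
  have rc: "r \<in> carrier G" and e: "r \<otimes> k = k \<otimes> r" using assms by (auto simp: centr_def)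
  have "conjg G r k = k \<otimes> r \<otimes> inv r" unfolding conjg_def using e by simp
  also have "\<dots> = k" using rc assms(2) by (simp add: m_assoc)
  finally show ?thesis .
qed

end

locale gactr = gact G act for G :: "('g,'m) monoid_scheme" (structure) and act :: "'g \<Rightarrow> 'a::ring \<Rightarrow> 'a" +
  assumes act_times: "x \<in> carrier G \<Longrightarrow> act x (a * b) = act x a * act x b"
begin

lemma conj_inv_act:
  assumes Z: "Z \<subseteq> carrier G" and a: "a \<in> invariants act Z" and w: "w \<in> carrier G"
    and j: "j \<in> conjset G w Z"
  shows "act j (act w a) = act w a"
proof -
  have jc: "j \<in> carrier G" and jz: "inv w \<otimes> j \<otimes> w \<in> Z" using j mem_conjset[OF Z w] by auto
  have "act j (act w a) = act (j \<otimes> w) a" using jc w by (simp add: act_mult)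
  also have "j \<otimes> w = w \<otimes> (inv w \<otimes> j \<otimes> w)" using jc w by (simp add: gsimps)
  also have "act \<dots> a = act w (act (inv w \<otimes> j \<otimes> w) a)" using jc w by (intro act_mult) auto
  also have "\<dots> = act w a" using a jz by (simp add: invariants_def)
  finally show ?thesis .
qed

lemma sum_comp:
  fixes comp :: "'g \<Rightarrow> 'a set"
  assumes z: "\<And>u. u \<in> carrier G \<Longrightarrow> 0 \<in> comp u"
    and add: "\<And>u a b. u \<in> carrier G \<Longrightarrow> a \<in> comp u \<Longrightarrow> b \<in> comp u \<Longrightarrow> a + b \<in> comp u"
    and u: "u \<in> carrier G" and f: "\<And>i. i \<in> S \<Longrightarrow> f i \<in> comp u"
  shows "sum f S \<in> comp u"
proof (cases "finite S")
  case True then show ?thesis using f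
    by (induction S rule: finite_induct) (auto intro: z[OF u] add[OF u])
next
  case False then show ?thesis using z[OF u] by simp
qed

end


context gactr begin

lemma main:
  fixes comp :: "'g \<Rightarrow> 'a set"
    and C D :: "'g set"
    and k y :: "'g \<Rightarrow> 'g"
    and g h :: 'g
    and \<alpha> \<beta> :: 'a
  assumes comp_zero: "\<And>u. u \<in> carrier G \<Longrightarrow> 0 \<in> comp u"
    and comp_add: "\<And>u a b. u \<in> carrier G \<Longrightarrow> a \<in> comp u \<Longrightarrow> b \<in> comp u \<Longrightarrow> a + b \<in> comp u"
    and comp_mult: "\<And>u v a b. u \<in> carrier G \<Longrightarrow> v \<in> carrier G \<Longrightarrow> a \<in> comp u \<Longrightarrow> b \<in> comp v
                       \<Longrightarrow> a * b \<in> comp (u \<otimes> v)"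
    and act_comp: "\<And>x u a. x \<in> carrier G \<Longrightarrow> u \<in> carrier G \<Longrightarrow> a \<in> comp u
                       \<Longrightarrow> act x a \<in> comp (conjg G x u)"
    and C_sub: "C \<subseteq> carrier G"
    and g: "g \<in> C" and h: "h \<in> C"
    and \<alpha>: "\<alpha> \<in> comp g \<inter> invariants act (centr G g)"
    and \<beta>: "\<beta> \<in> comp h \<inter> invariants act (centr G h)"
    and D_sub: "D \<subseteq> carrier G"
    and D_reps: "\<And>z. z \<in> carrier G \<Longrightarrow> \<exists>!x. x \<in> D \<and> z \<in> double_coset G (centr G g) x (centr G h)"
    and k_y: "\<And>x. x \<in> D \<Longrightarrow> k x \<in> C \<and> y x \<in> carrier G \<and>
                conjg G (y x) g \<otimes> conjg G (y x \<otimes> x) h = k x"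
  shows "(\<forall>x\<in>D. transfer G act (centr G (k x))
                    (conjset G (y x) (centr G g) \<inter> conjset G (y x \<otimes> x) (centr G h))
                    (act (y x) \<alpha> * act (y x \<otimes> x) \<beta>)
                  \<in> comp (k x) \<inter> invariants act (centr G (k x)))
       \<and> transfer G act (carrier G) (centr G g) \<alpha> * transfer G act (carrier G) (centr G h) \<beta>
         = (\<Sum>x\<in>D. transfer G act (carrier G) (centr G (k x))
                     (transfer G act (centr G (k x))
                        (conjset G (y x) (centr G g) \<inter> conjset G (y x \<otimes> x) (centr G h))
                        (act (y x) \<alpha> * act (y x \<otimes> x) \<beta>)))"
proof -
  define Zg where "Zg = centr G g"
  define Zh where "Zh = centr G h"
  define J where "J x = conjset G (y x) Zg \<inter> conjset G (y x \<otimes> x) Zh" for x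
  define ax where "ax x = act (y x) \<alpha> * act (y x \<otimes> x) \<beta>" for x
  have gc: "g \<in> carrier G" and hc: "h \<in> carrier G" using g h C_sub by auto
  have SZg: "subgroup Zg G" and SZh: "subgroup Zh G"
    unfolding Zg_def Zh_def using centr_subgroup gc hc by auto
  have ZgG: "Zg \<subseteq> carrier G" and ZhG: "Zh \<subseteq> carrier G"
    using subgroup.subset SZg SZh by auto
  have \<alpha>c: "\<alpha> \<in> comp g" and \<alpha>i: "\<alpha> \<in> invariants act Zg" using \<alpha> Zg_def by auto
  have \<beta>c: "\<beta> \<in> comp h" and \<beta>i: "\<beta> \<in> invariants act Zh" using \<beta> Zh_def by auto
  have xc: "x \<in> carrier G" if "x \<in> D" for x using that D_sub by auto
  have yc: "y x \<in> carrier G" if "x \<in> D" for x using that k_y by auto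
  have kc: "k x \<in> carrier G" if "x \<in> D" for x using that k_y C_sub by auto
  have yxc: "y x \<otimes> x \<in> carrier G" if "x \<in> D" for x using that xc yc by auto
  have J_eq: "J x = centr G (conjg G (y x) g) \<inter> centr G (conjg G (y x \<otimes> x) h)" if "x \<in> D" for x
    unfolding J_def Zg_def Zh_def using conjset_centr yc[OF that] yxc[OF that] gc hc by simp
  have SJ: "subgroup (J x) G" if "x \<in> D" for x
    unfolding J_eq[OF that]
    by (intro subgroups_Inter_pair centr_subgroup conjg_closed yc[OF that] yxc[OF that] gc hc)
  have SZk: "subgroup (centr G (k x)) G" if "x \<in> D" for x using centr_subgroup kc[OF that] .
  have JZk: "J x \<subseteq> centr G (k x)" if x: "x \<in> D" for x
  proof
    fix u assume "u \<in> J x"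
    then have "u \<in> centr G (conjg G (y x) g \<otimes> conjg G (y x \<otimes> x) h)"
      unfolding J_eq[OF x]
      by (intro centr_mult conjg_closed yc[OF x] yxc[OF x] gc hc) auto
    then show "u \<in> centr G (k x)" using k_y[OF x] by simp
  qed
  have ax_inv: "ax x \<in> invariants act (J x)" if x: "x \<in> D" for x
    unfolding invariants_def
  proof (intro CollectI ballI)
    fix j assume j: "j \<in> J x"
    have jc: "j \<in> carrier G" using subgroup.mem_carrier[OF SJ[OF x] j] .
    have "act j (ax x) = act j (act (y x) \<alpha>) * act j (act (y x \<otimes> x) \<beta>)"
      unfolding ax_def using act_times[OF jc] .
    also have "\<dots> = ax x" unfolding ax_def
      using conj_inv_act[OF ZgG \<alpha>i yc[OF x], of j] conj_inv_act[OF ZhG \<beta>i yxc[OF x], of j] j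
      unfolding J_def by simp
    finally show "act j (ax x) = ax x" .
  qed
  have ax_comp: "ax x \<in> comp (k x)" if x: "x \<in> D" for x
  proof -
    have "ax x \<in> comp (conjg G (y x) g \<otimes> conjg G (y x \<otimes> x) h)"
      unfolding ax_def
      by (intro comp_mult act_comp conjg_closed yc[OF x] yxc[OF x] gc hc \<alpha>c \<beta>c)
    then show ?thesis using k_y[OF x] by simp
  qed
  have part1: "transfer G act (centr G (k x)) (J x) (ax x) \<in> comp (k x) \<inter> invariants act (centr G (k x))"
    if x: "x \<in> D" for x
  proof
    note P = lcosets_props[OF SJ[OF x] SZk[OF x] JZk[OF x]]
    show "transfer G act (centr G (k x)) (J x) (ax x) \<in> comp (k x)"
      unfolding transfer_crep
    proof (rule sum_comp[of comp, OF comp_zero comp_add kc[OF x]])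
      fix c assume c: "c \<in> lcosets_in G (centr G (k x)) (J x)"
      have "act (crep c) (ax x) \<in> comp (conjg G (crep c) (k x))"
        by (rule act_comp[OF P(2)[OF c] kc[OF x] ax_comp[OF x]])
      then show "act (crep c) (ax x) \<in> comp (k x)"
        using conjg_centr[OF P(1)[OF c] kc[OF x]] by simp
    qed auto
    show "transfer G act (centr G (k x)) (J x) (ax x) \<in> invariants act (centr G (k x))"
      unfolding invariants_def
      by (intro CollectI ballI transfer_invariant[OF SJ[OF x] SZk[OF x] JZk[OF x] ax_inv[OF x]])
  qed

  have S: "subgroup (carrier G) G" by (rule subgroup_self)
  let ?A = "lcosets_in G (carrier G) Zg" and ?B = "lcosets_in G (carrier G) Zh"
  let ?P = "?A \<times> ?B"
  define F where "F p = act (crep (fst p)) \<alpha> * act (crep (snd p)) \<beta>" for p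
  note PA = lcosets_props[OF SZg S ZgG] and PB = lcosets_props[OF SZh S ZhG]
  have finP: "finite ?P" using finite_lcosets by auto
  have finD: "finite D" by (rule finite_subset[OF D_sub finG])
  have L1: "transfer G act (carrier G) Zg \<alpha> * transfer G act (carrier G) Zh \<beta> = sum F ?P"
    unfolding transfer_crep sum_product F_def by (simp add: sum.cartesian_product split_beta)
  define \<chi> where "\<chi> p = (THE x. x \<in> D \<and> inv (crep (fst p)) \<otimes> crep (snd p) \<in> double_coset G Zg x Zh)" for p
  have pc: "inv (crep (fst p)) \<otimes> crep (snd p) \<in> carrier G" if "p \<in> ?P" for p
    using that PA(2) PB(2) by auto
  have \<chi>1: "\<chi> p \<in> D \<and> inv (crep (fst p)) \<otimes> crep (snd p) \<in> double_coset G Zg (\<chi> p) Zh" if "p \<in> ?P" for p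
    unfolding \<chi>_def by (rule theI'[OF D_reps[OF pc[OF that], folded Zg_def Zh_def]])
  have \<chi>2: "\<chi> p = x" if "p \<in> ?P" "x \<in> D" "inv (crep (fst p)) \<otimes> crep (snd p) \<in> double_coset G Zg x Zh" for p x
    unfolding \<chi>_def using the1_equality[OF D_reps[OF pc[OF that(1)], folded Zg_def Zh_def]] that(2,3) by simp
  have \<chi>D: "\<chi> ` ?P \<subseteq> D" using \<chi>1 by auto
  have L2: "sum F ?P = (\<Sum>x\<in>D. sum F {p. p \<in> ?P \<and> \<chi> p = x})"
    by (rule sum.group[OF finP finD \<chi>D, symmetric])
  have L3: "sum F {p. p \<in> ?P \<and> \<chi> p = x} = transfer G act (carrier G) (J x) (ax x)" if x: "x \<in> D" for x
  proof -
    let ?Q = "lcosets_in G (carrier G) (J x)"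
    define \<psi> where "\<psi> c = ((crep c \<otimes> y x) <# Zg, (crep c \<otimes> (y x \<otimes> x)) <# Zh)" for c
    have JG: "J x \<subseteq> carrier G" using subgroup.subset[OF SJ[OF x]] .
    note PQ = lcosets_props[OF SJ[OF x] S JG]
    have F\<psi>: "F (\<psi> c) = act (crep c) (ax x)" if c: "c \<in> ?Q" for c
    proof -
      have rc: "crep c \<in> carrier G" using PQ(2)[OF c] .
      have m1: "crep c \<otimes> y x \<in> carrier G" using rc yc[OF x] by simp
      have m2: "crep c \<otimes> (y x \<otimes> x) \<in> carrier G" using rc yxc[OF x] by simp
      have "act (crep ((crep c \<otimes> y x) <# Zg)) \<alpha> = act (crep c \<otimes> y x) \<alpha>"
        by (rule inv_act[OF SZg \<alpha>i crep_carrier[OF SZg m1] m1 crep_coset[OF SZg m1]])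
      also have "\<dots> = act (crep c) (act (y x) \<alpha>)" using rc yc[OF x] by (rule act_mult)
      finally have e1: "act (crep ((crep c \<otimes> y x) <# Zg)) \<alpha> = act (crep c) (act (y x) \<alpha>)" .
      have "act (crep ((crep c \<otimes> (y x \<otimes> x)) <# Zh)) \<beta> = act (crep c \<otimes> (y x \<otimes> x)) \<beta>"
        by (rule inv_act[OF SZh \<beta>i crep_carrier[OF SZh m2] m2 crep_coset[OF SZh m2]])
      also have "\<dots> = act (crep c) (act (y x \<otimes> x) \<beta>)" using rc yxc[OF x] by (rule act_mult)
      finally have e2: "act (crep ((crep c \<otimes> (y x \<otimes> x)) <# Zh)) \<beta> = act (crep c) (act (y x \<otimes> x) \<beta>)" .
      show ?thesis unfolding F_def \<psi>_def ax_def using e1 e2 act_times[OF rc] by simp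
    qed
    have bij: "bij_betw \<psi> ?Q {p. p \<in> ?P \<and> \<chi> p = x}"
    proof (rule bij_betw_imageI)
      show "inj_on \<psi> ?Q"
      proof (rule inj_onI)
        fix c c' assume c: "c \<in> ?Q" and c': "c' \<in> ?Q" and e: "\<psi> c = \<psi> c'"
        have rc: "crep c \<in> carrier G" and rc': "crep c' \<in> carrier G" using PQ(2) c c' by auto
        have "inv (crep c) \<otimes> crep c' \<in> conjset G (y x) Zg"
          using e conj_coset[OF SZg rc rc' yc[OF x]] unfolding \<psi>_def by simp
        moreover have "inv (crep c) \<otimes> crep c' \<in> conjset G (y x \<otimes> x) Zh"
          using e conj_coset[OF SZh rc rc' yxc[OF x]] unfolding \<psi>_def by simp
        ultimately have "inv (crep c) \<otimes> crep c' \<in> J x" unfolding J_def by simp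
        then have "crep c <# J x = crep c' <# J x" using lcoset_eq_iff[OF SJ[OF x] rc rc'] by simp
        then show "c = c'" using PQ(3) c c' by simp
      qed
      show "\<psi> ` ?Q = {p. p \<in> ?P \<and> \<chi> p = x}"
      proof (rule subset_antisym)
        show "\<psi> ` ?Q \<subseteq> {p. p \<in> ?P \<and> \<chi> p = x}"
        proof (rule image_subsetI)
          fix c assume c: "c \<in> ?Q"
          have rc: "crep c \<in> carrier G" using PQ(2)[OF c] .
          define m1 where "m1 = crep c \<otimes> y x"
          define m2 where "m2 = crep c \<otimes> (y x \<otimes> x)"
          have m1c: "m1 \<in> carrier G" unfolding m1_def using rc yc[OF x] by simp
          have m2c: "m2 \<in> carrier G" unfolding m2_def using rc yxc[OF x] by simp
          have pP: "\<psi> c \<in> ?P" unfolding \<psi>_def using m1c m2c m1_def m2_def by (auto intro!: lcosets_inI)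
          have "inv m1 \<otimes> crep (m1 <# Zg) \<in> Zg" using crep_mem[OF SZg m1c] mem_lcoset[OF SZg m1c] by simp
          then obtain z1 where z1: "z1 \<in> Zg" "crep (m1 <# Zg) = m1 \<otimes> z1"
            using crep_carrier[OF SZg m1c] m1c by (intro that[of "inv m1 \<otimes> crep (m1 <# Zg)"]) simp_all
          have "inv m2 \<otimes> crep (m2 <# Zh) \<in> Zh" using crep_mem[OF SZh m2c] mem_lcoset[OF SZh m2c] by simp
          then obtain z2 where z2: "z2 \<in> Zh" "crep (m2 <# Zh) = m2 \<otimes> z2"
            using crep_carrier[OF SZh m2c] m2c by (intro that[of "inv m2 \<otimes> crep (m2 <# Zh)"]) simp_all
          have z1c: "z1 \<in> carrier G" using z1(1) ZgG by auto
          have z2c: "z2 \<in> carrier G" using z2(1) ZhG by auto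
          have "inv (crep (fst (\<psi> c))) \<otimes> crep (snd (\<psi> c)) = inv (m1 \<otimes> z1) \<otimes> (m2 \<otimes> z2)"
            unfolding \<psi>_def m1_def[symmetric] m2_def[symmetric] using z1(2) z2(2) by simp
          also have "\<dots> = inv z1 \<otimes> x \<otimes> z2"
            unfolding m1_def m2_def using rc yc[OF x] xc[OF x] z1c z2c by (simp add: gsimps)
          finally have "inv (crep (fst (\<psi> c))) \<otimes> crep (snd (\<psi> c)) \<in> double_coset G Zg x Zh"
            unfolding double_coset_def using z1(1) z2(1) subgroup.m_inv_closed[OF SZg z1(1)] by blast
          then show "\<psi> c \<in> {p. p \<in> ?P \<and> \<chi> p = x}" using \<chi>2[OF pP x] pP by simp
        qed
        show "{p. p \<in> ?P \<and> \<chi> p = x} \<subseteq> \<psi> ` ?Q"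
        proof
          fix p assume p: "p \<in> {p. p \<in> ?P \<and> \<chi> p = x}"
          obtain c d where cd: "p = (c, d)" "c \<in> ?A" "d \<in> ?B" using p by auto
          have pP: "p \<in> ?P" using p by simp
          have r1c: "crep c \<in> carrier G" using PA(2)[OF cd(2)] .
          have r2c: "crep d \<in> carrier G" using PB(2)[OF cd(3)] .
          have "inv (crep c) \<otimes> crep d \<in> double_coset G Zg x Zh" using \<chi>1[OF pP] p cd by simp
          then obtain z1 z2 where zz: "inv (crep c) \<otimes> crep d = z1 \<otimes> x \<otimes> z2" "z1 \<in> Zg" "z2 \<in> Zh"
            unfolding double_coset_def by blast
          have z1c: "z1 \<in> carrier G" using zz(2) ZgG by auto
          have z2c: "z2 \<in> carrier G" using zz(3) ZhG by auto
          have r2eq: "crep d = crep c \<otimes> (z1 \<otimes> x \<otimes> z2)"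
          proof -
            have "crep d = crep c \<otimes> (inv (crep c) \<otimes> crep d)" using r1c r2c by simp
            then show ?thesis using zz(1) by simp
          qed
          define e where "e = crep c \<otimes> z1 \<otimes> inv (y x)"
          have ec: "e \<in> carrier G" unfolding e_def using r1c z1c yc[OF x] by simp
          define c0 where "c0 = e <# J x"
          have c0Q: "c0 \<in> ?Q" unfolding c0_def using ec by (rule lcosets_inI)
          have rec: "crep c0 \<in> carrier G" unfolding c0_def using crep_carrier[OF SJ[OF x] ec] .
          have "crep c0 <# J x = e <# J x" unfolding c0_def using crep_coset[OF SJ[OF x] ec] .
          then have j: "inv (crep c0) \<otimes> e \<in> J x" using lcoset_eq_iff[OF SJ[OF x] rec ec] by simp
          have f1: "(crep c0 \<otimes> y x) <# Zg = c"
          proof -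
            have "(crep c0 \<otimes> y x) <# Zg = (e \<otimes> y x) <# Zg"
              using conj_coset[OF SZg rec ec yc[OF x]] j unfolding J_def by simp
            also have "e \<otimes> y x = crep c \<otimes> z1"
              unfolding e_def using r1c z1c yc[OF x] by (simp add: gsimps)
            also have "(crep c \<otimes> z1) <# Zg = crep c <# Zg"
              using lcoset_eq_iff[OF SZg _ r1c, of "crep c \<otimes> z1"] r1c z1c zz(2) subgroup.m_inv_closed[OF SZg zz(2)] by (simp add: gsimps)
            also have "\<dots> = c" using PA(3)[OF cd(2)] .
            finally show ?thesis .
          qed
          have f2: "(crep c0 \<otimes> (y x \<otimes> x)) <# Zh = d"
          proof -
            have "(crep c0 \<otimes> (y x \<otimes> x)) <# Zh = (e \<otimes> (y x \<otimes> x)) <# Zh"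
              using conj_coset[OF SZh rec ec yxc[OF x]] j unfolding J_def by simp
            also have "e \<otimes> (y x \<otimes> x) = crep c \<otimes> (z1 \<otimes> x)"
              unfolding e_def using r1c z1c yc[OF x] xc[OF x] by (simp add: gsimps)
            also have "(crep c \<otimes> (z1 \<otimes> x)) <# Zh = crep d <# Zh"
            proof -
              have "inv (crep c \<otimes> (z1 \<otimes> x)) \<otimes> crep d = z2"
                unfolding r2eq using r1c z1c z2c xc[OF x] by (simp add: gsimps)
              then show ?thesis using lcoset_eq_iff[OF SZh _ r2c, of "crep c \<otimes> (z1 \<otimes> x)"]
                  r1c z1c xc[OF x] zz(3) by simp
            qed
            also have "\<dots> = d" using PB(3)[OF cd(3)] .
            finally show ?thesis .
          qed
          have "\<psi> c0 = p" unfolding \<psi>_def cd(1) using f1 f2 by simp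
          then show "p \<in> \<psi> ` ?Q" using c0Q by (intro image_eqI[of p \<psi> c0]) simp_all
        qed
      qed
    qed
    have "sum F {p. p \<in> ?P \<and> \<chi> p = x} = (\<Sum>c\<in>?Q. F (\<psi> c))"
      using sum.reindex_bij_betw[OF bij, of F] by simp
    also have "\<dots> = (\<Sum>c\<in>?Q. act (crep c) (ax x))" using F\<psi> by (rule sum.cong[OF refl])
    also have "\<dots> = transfer G act (carrier G) (J x) (ax x)" unfolding transfer_crep ..
    finally show ?thesis .
  qed
  have P2: "transfer G act (carrier G) Zg \<alpha> * transfer G act (carrier G) Zh \<beta>
      = (\<Sum>x\<in>D. transfer G act (carrier G) (centr G (k x)) (transfer G act (centr G (k x)) (J x) (ax x)))"
    unfolding L1 L2
    using L3 transfer_trans[OF SJ SZk JZk ax_inv] by (intro sum.cong[OF refl]) simp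
  have P1: "\<forall>x\<in>D. transfer G act (centr G (k x)) (J x) (ax x) \<in> comp (k x) \<inter> invariants act (centr G (k x))"
    using part1 by (intro ballI)
  from P1 P2 show ?thesis unfolding J_def ax_def Zg_def Zh_def by (rule conjI)
qed

end

theorem theorem11p3:
  fixes G :: "('g, 'm) monoid_scheme"
    and act :: "'g \<Rightarrow> 'a::ring \<Rightarrow> 'a"
    and comp :: "'g \<Rightarrow> 'a set"
    and C D :: "'g set"
    and k y :: "'g \<Rightarrow> 'g"
    and g h :: 'g
    and \<alpha> \<beta> :: 'a
  assumes grp: "group G" and fin: "finite (carrier G)"
    \<comment> \<open>G-graded ring: direct sum of additive subgroups, multiplicatively graded\<close>
    and comp_zero: "\<And>u. u \<in> carrier G \<Longrightarrow> 0 \<in> comp u"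
    and comp_add: "\<And>u a b. u \<in> carrier G \<Longrightarrow> a \<in> comp u \<Longrightarrow> b \<in> comp u \<Longrightarrow> a + b \<in> comp u"
    and comp_uminus: "\<And>u a. u \<in> carrier G \<Longrightarrow> a \<in> comp u \<Longrightarrow> - a \<in> comp u"
    and direct_sum: "\<And>a. \<exists>!f. (\<forall>u\<in>carrier G. f u \<in> comp u) \<and> (\<forall>u. u \<notin> carrier G \<longrightarrow> f u = 0)
                              \<and> a = (\<Sum>u\<in>carrier G. f u)"
    and comp_mult: "\<And>u v a b. u \<in> carrier G \<Longrightarrow> v \<in> carrier G \<Longrightarrow> a \<in> comp u \<Longrightarrow> b \<in> comp v
                       \<Longrightarrow> a * b \<in> comp (u \<otimes>\<^bsub>G\<^esub> v)"
    \<comment> \<open>G acts by ring automorphisms, mapping the u-component to the x u x^-1-component\<close>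
    and act_one: "\<And>a. act \<one>\<^bsub>G\<^esub> a = a"
    and act_mult: "\<And>x z a. x \<in> carrier G \<Longrightarrow> z \<in> carrier G \<Longrightarrow> act (x \<otimes>\<^bsub>G\<^esub> z) a = act x (act z a)"
    and act_add: "\<And>x a b. x \<in> carrier G \<Longrightarrow> act x (a + b) = act x a + act x b"
    and act_times: "\<And>x a b. x \<in> carrier G \<Longrightarrow> act x (a * b) = act x a * act x b"
    and act_comp: "\<And>x u a. x \<in> carrier G \<Longrightarrow> u \<in> carrier G \<Longrightarrow> a \<in> comp u
                       \<Longrightarrow> act x a \<in> comp (conjg G x u)"
    \<comment> \<open>C: set of representatives of the conjugacy classes of G\<close>
    and C_sub: "C \<subseteq> carrier G"
    and C_reps: "\<And>u. u \<in> carrier G \<Longrightarrow> \<exists>!c. c \<in> C \<and> (\<exists>z\<in>carrier G. c = conjg G z u)"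
    and g: "g \<in> C" and h: "h \<in> C"
    and \<alpha>: "\<alpha> \<in> comp g \<inter> invariants act (centr G g)"
    and \<beta>: "\<beta> \<in> comp h \<inter> invariants act (centr G h)"
    \<comment> \<open>D: set of representatives of the double cosets Z(g) \ G / Z(h)\<close>
    and D_sub: "D \<subseteq> carrier G"
    and D_reps: "\<And>z. z \<in> carrier G \<Longrightarrow> \<exists>!x. x \<in> D \<and> z \<in> double_coset G (centr G g) x (centr G h)"
    and k_y: "\<And>x. x \<in> D \<Longrightarrow> k x \<in> C \<and> y x \<in> carrier G \<and>
                conjg G (y x) g \<otimes>\<^bsub>G\<^esub> conjg G (y x \<otimes>\<^bsub>G\<^esub> x) h = k x"
  shows "(\<forall>x\<in>D. transfer G act (centr G (k x))
                    (conjset G (y x) (centr G g) \<inter> conjset G (y x \<otimes>\<^bsub>G\<^esub> x) (centr G h))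
                    (act (y x) \<alpha> * act (y x \<otimes>\<^bsub>G\<^esub> x) \<beta>)
                  \<in> comp (k x) \<inter> invariants act (centr G (k x)))
       \<and> transfer G act (carrier G) (centr G g) \<alpha> * transfer G act (carrier G) (centr G h) \<beta>
         = (\<Sum>x\<in>D. transfer G act (carrier G) (centr G (k x))
                     (transfer G act (centr G (k x))
                        (conjset G (y x) (centr G g) \<inter> conjset G (y x \<otimes>\<^bsub>G\<^esub> x) (centr G h))
                        (act (y x) \<alpha> * act (y x \<otimes>\<^bsub>G\<^esub> x) \<beta>)))"
  proof -
  interpret gactr G act
    using grp by (simp add: gactr_def gactr_axioms_def gact_def gact_axioms_def act_one act_mult act_add act_times fin)
  show ?thesis
    by (rule main[OF comp_zero comp_add comp_mult act_comp C_sub g h \<alpha> \<beta> D_sub D_reps k_y])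
qed

end
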